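(* Let $\mathcal{G}=(G,(m,r))$ be a mutant-biased fitness graph. Then the fixation probability is submodular: for all $S,T\subseteq V$, \[ \operatorname{fp}_{\mathcal{G}}(S)+\operatorname{fp}_{\mathcal{G}}(T)\ge\operatorname{fp}_{\mathcal{G}}(S\cup T)+\operatorname{fp}_{\mathcal{G}}(S\cap T). \]
   Context: A fitness graph is $\mathcal{G}=(G,(m,r))$ where $G=(V,E,w)$ is a strongly connected directed graph, $w(u,\cdot)$ is a probability distribution over out-neighbours of $u$, and $r,m\colon V\to(0,\infty)$; it is mutant-biased if $m(u)\ge r(u)$ for all $u$. For a configuration (set of mutants) $X\subseteq V$, $f_X(u)=m(u)$ if $u\in X$, else $r(u)$. The Heterogeneous Moran process starts at $\mathcal{X}_0=S$; from $\mathcal{X}_t=X$ it picks $u$ with probability $f_X(u)/\sum_v f_X(v)$, then $v$ with probability $w(u,v)$, and $v$ takes the type of $u$. $\operatorname{fp}_{\mathcal{G}}(S)$ is the probability that the process eventually reaches $V$ (with $\operatorname{fp}_{\mathcal{G}}(\emptyset)=0$). *)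

theory Defs
  imports Complex_Main
begin

definition fitness_graph ::
  "'a set \<Rightarrow> ('a \<times> 'a) set \<Rightarrow> ('a \<Rightarrow> 'a \<Rightarrow> real) \<Rightarrow> ('a \<Rightarrow> real) \<Rightarrow> ('a \<Rightarrow> real) \<Rightarrow> bool"
where
  "fitness_graph V E w m r \<longleftrightarrow>
     finite V \<and> V \<noteq> {} \<and> E \<subseteq> V \<times> V \<and>
     (\<forall>u\<in>V. \<forall>v\<in>V. (u, v) \<in> E\<^sup>*) \<and>
     (\<forall>u\<in>V. \<forall>v\<in>V. ((u, v) \<in> E \<longrightarrow> w u v > 0) \<and> ((u, v) \<notin> E \<longrightarrow> w u v = 0)) \<and>
     (\<forall>u\<in>V. (\<Sum>v\<in>V. w u v) = 1) \<and>
     (\<forall>u\<in>V. r u > 0 \<and> m u > 0)"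

definition mutant_biased :: "'a set \<Rightarrow> ('a \<Rightarrow> real) \<Rightarrow> ('a \<Rightarrow> real) \<Rightarrow> bool" where
  "mutant_biased V m r \<longleftrightarrow> (\<forall>u\<in>V. m u \<ge> r u)"

definition fit :: "('a \<Rightarrow> real) \<Rightarrow> ('a \<Rightarrow> real) \<Rightarrow> 'a set \<Rightarrow> 'a \<Rightarrow> real" where
  "fit m r X u = (if u \<in> X then m u else r u)"

definition moran_step ::
  "'a set \<Rightarrow> ('a \<Rightarrow> 'a \<Rightarrow> real) \<Rightarrow> ('a \<Rightarrow> real) \<Rightarrow> ('a \<Rightarrow> real) \<Rightarrow> ('a set \<Rightarrow> real) \<Rightarrow> 'a set \<Rightarrow> real"
where
  "moran_step V w m r h X =
     (\<Sum>u\<in>V. \<Sum>v\<in>V. (fit m r X u / (\<Sum>x\<in>V. fit m r X x)) * w u v *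
        h (if u \<in> X then insert v X else X - {v}))"

text \<open>Probability that the process started at X has reached V within n steps
  (V is absorbing, so this is the probability of being in V at time n).\<close>
fun reach_prob ::
  "'a set \<Rightarrow> ('a \<Rightarrow> 'a \<Rightarrow> real) \<Rightarrow> ('a \<Rightarrow> real) \<Rightarrow> ('a \<Rightarrow> real) \<Rightarrow> nat \<Rightarrow> 'a set \<Rightarrow> real"
where
  "reach_prob V w m r 0 X = (if X = V then 1 else 0)"
| "reach_prob V w m r (Suc n) X =
     (if X = V then 1 else moran_step V w m r (reach_prob V w m r n) X)"

definition fp ::
  "'a set \<Rightarrow> ('a \<Rightarrow> 'a \<Rightarrow> real) \<Rightarrow> ('a \<Rightarrow> real) \<Rightarrow> ('a \<Rightarrow> real) \<Rightarrow> 'a set \<Rightarrow> real"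
where
  "fp V w m r S = (if S = {} then 0 else (SUP n. reach_prob V w m r n S))"

end

theory Submission
  imports Defs
begin

lemma fg_facts:
  assumes "fitness_graph V E w m r"
  shows "finite V" "V \<noteq> {}" "E \<subseteq> V \<times> V"
    "\<And>u v. u \<in> V \<Longrightarrow> v \<in> V \<Longrightarrow> w u v \<ge> 0"
    "\<And>u v. (u, v) \<in> E \<Longrightarrow> w u v > 0"
    "\<And>u. u \<in> V \<Longrightarrow> (\<Sum>v\<in>V. w u v) = 1"
    "\<And>u. u \<in> V \<Longrightarrow> r u > 0" "\<And>u. u \<in> V \<Longrightarrow> m u > 0"
    "\<And>u v. u \<in> V \<Longrightarrow> v \<in> V \<Longrightarrow> (u, v) \<in> E\<^sup>*"
proof -
  show "finite V" "V \<noteq> {}" "E \<subseteq> V \<times> V" using assms unfolding fitness_graph_def by auto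
  show "\<And>u v. u \<in> V \<Longrightarrow> v \<in> V \<Longrightarrow> w u v \<ge> 0"
    using assms unfolding fitness_graph_def by (metis order_le_less)
  show "\<And>u v. (u, v) \<in> E \<Longrightarrow> w u v > 0"
    using assms unfolding fitness_graph_def by blast
  show "\<And>u. u \<in> V \<Longrightarrow> (\<Sum>v\<in>V. w u v) = 1"
    "\<And>u. u \<in> V \<Longrightarrow> r u > 0" "\<And>u. u \<in> V \<Longrightarrow> m u > 0"
    "\<And>u v. u \<in> V \<Longrightarrow> v \<in> V \<Longrightarrow> (u, v) \<in> E\<^sup>*"
    using assms unfolding fitness_graph_def by auto
qed

lemma fit_pos: "fitness_graph V E w m r \<Longrightarrow> u \<in> V \<Longrightarrow> fit m r X u > 0"
  using fg_facts(7,8) unfolding fit_def by auto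

lemma sumfit_pos: "fitness_graph V E w m r \<Longrightarrow> (\<Sum>x\<in>V. fit m r X x) > 0"
  using fg_facts(1,2) fit_pos by (metis sum_pos)

lemma weights_sum:
  assumes "fitness_graph V E w m r"
  shows "(\<Sum>u\<in>V. \<Sum>v\<in>V. fit m r X u / (\<Sum>x\<in>V. fit m r X x) * w u v) = 1"
proof -
  have "(\<Sum>v\<in>V. fit m r X u / (\<Sum>x\<in>V. fit m r X x) * w u v)
      = fit m r X u / (\<Sum>x\<in>V. fit m r X x)" if "u \<in> V" for u
    using sum_distrib_left[symmetric, of "fit m r X u / (\<Sum>x\<in>V. fit m r X x)" "w u" V]
      fg_facts(6)[OF assms that] by simp
  then have "(\<Sum>u\<in>V. \<Sum>v\<in>V. fit m r X u / (\<Sum>x\<in>V. fit m r X x) * w u v)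
      = (\<Sum>u\<in>V. fit m r X u / (\<Sum>x\<in>V. fit m r X x))"
    by (rule sum.cong[OF refl])
  also have "\<dots> = 1" using sumfit_pos[OF assms, of X]
    by (simp add: sum_divide_distrib[symmetric])
  finally show ?thesis .
qed

lemma moran_step_mono:
  assumes "fitness_graph V E w m r" "\<And>Y. h Y \<le> g Y"
  shows "moran_step V w m r h X \<le> moran_step V w m r g X"
  unfolding moran_step_def
  apply (intro sum_mono mult_left_mono assms(2))
  using fit_pos[OF assms(1)] sumfit_pos[OF assms(1)] fg_facts(4)[OF assms(1)]
  by (simp add: less_imp_le)

lemma moran_step_const:
  assumes "fitness_graph V E w m r"
  shows "moran_step V w m r (\<lambda>_. c) X = c"
proof -
  have "moran_step V w m r (\<lambda>_. c) X
     = (\<Sum>u\<in>V. \<Sum>v\<in>V. fit m r X u / (\<Sum>x\<in>V. fit m r X x) * w u v) * c"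
    unfolding moran_step_def by (simp only: sum_distrib_right)
  then show ?thesis using weights_sum[OF assms, of X] by simp
qed

lemma reach_bounds:
  assumes "fitness_graph V E w m r"
  shows "0 \<le> reach_prob V w m r n X \<and> reach_prob V w m r n X \<le> 1"
proof (induction n arbitrary: X)
  case 0 then show ?case by simp
next
  case (Suc n)
  have "moran_step V w m r (\<lambda>_. 0) X \<le> moran_step V w m r (reach_prob V w m r n) X"
    by (rule moran_step_mono[OF assms]) (use Suc in auto)
  moreover have "moran_step V w m r (reach_prob V w m r n) X \<le> moran_step V w m r (\<lambda>_. 1) X"
    by (rule moran_step_mono[OF assms]) (use Suc in auto)
  ultimately show ?case using moran_step_const[OF assms] by simp
qed

lemma reach_inc:
  assumes "fitness_graph V E w m r"
  shows "reach_prob V w m r n X \<le> reach_prob V w m r (Suc n) X"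
proof (induction n arbitrary: X)
  case 0
  have "moran_step V w m r (\<lambda>_. 0) X \<le> moran_step V w m r (reach_prob V w m r 0) X"
    by (rule moran_step_mono[OF assms]) auto
  then show ?case using moran_step_const[OF assms] by simp
next
  case (Suc n)
  have "moran_step V w m r (reach_prob V w m r n) X \<le> moran_step V w m r (reach_prob V w m r (Suc n)) X"
    by (rule moran_step_mono[OF assms]) (use Suc in auto)
  then show ?case by simp
qed

lemma reach_empty:
  assumes "fitness_graph V E w m r"
  shows "reach_prob V w m r n {} = 0"
proof (induction n)
  case 0 then show ?case using fg_facts(2)[OF assms] by simp
next
  case (Suc n)
  then show ?case using fg_facts(2)[OF assms] by (simp add: moran_step_def)
qed

lemma reach_V: "reach_prob V w m r n V = 1"
  by (cases n) auto

lemma fp_lim: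
  assumes "fitness_graph V E w m r"
  shows "(\<lambda>n. reach_prob V w m r n X) \<longlonglongrightarrow> fp V w m r X"
proof (cases "X = {}")
  case True
  then show ?thesis using reach_empty[OF assms] by (simp add: fp_def)
next
  case False
  have "(\<lambda>n. reach_prob V w m r n X) \<longlonglongrightarrow> (SUP n. reach_prob V w m r n X)"
    apply (rule LIMSEQ_incseq_SUP)
    using reach_bounds[OF assms] reach_inc[OF assms]
     apply (auto intro: bdd_aboveI[of _ 1] incseq_SucI)
    done
  then show ?thesis using False by (simp add: fp_def)
qed

lemma fp_props:
  assumes "fitness_graph V E w m r"
  shows "fp V w m r {} = 0" "fp V w m r V = 1" "0 \<le> fp V w m r X"
    "X \<noteq> V \<Longrightarrow> fp V w m r X = moran_step V w m r (fp V w m r) X"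
proof -
  show "fp V w m r {} = 0" by (simp add: fp_def)
  show "fp V w m r V = 1"
    using fp_lim[OF assms, of V] by (simp add: reach_V LIMSEQ_const_iff)
  show "0 \<le> fp V w m r X"
    using fp_lim[OF assms, of X] reach_bounds[OF assms]
    by (meson LIMSEQ_le_const)
  assume "X \<noteq> V"
  have "(\<lambda>n. reach_prob V w m r (Suc n) X) \<longlonglongrightarrow> fp V w m r X"
    using fp_lim[OF assms, of X] by (rule LIMSEQ_Suc)
  moreover have "(\<lambda>n. reach_prob V w m r (Suc n) X) \<longlonglongrightarrow> moran_step V w m r (fp V w m r) X"
    using \<open>X \<noteq> V\<close> unfolding reach_prob.simps if_not_P[OF \<open>X \<noteq> V\<close>] moran_step_def
    by (intro tendsto_sum tendsto_mult tendsto_const fp_lim[OF assms])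
  ultimately show "fp V w m r X = moran_step V w m r (fp V w m r) X"
    by (rule LIMSEQ_unique)
qed


definition fullm :: "'a \<Rightarrow> 'a \<Rightarrow> 'a set \<Rightarrow> 'a set" where
  "fullm u v X = (if u \<in> X then insert v X else X - {v})"

definition mom :: "'a \<Rightarrow> 'a \<Rightarrow> 'a set \<Rightarrow> 'a set" where
  "mom u v X = (if u \<in> X then insert v X else X)"

lemma sum_w_times:
  assumes "fitness_graph V E w m r" "u \<in> V"
  shows "(\<Sum>v\<in>V. w u v * c) = c"
  using fg_facts(6)[OF assms] by (simp add: sum_distrib_right[symmetric])

lemma harm:
  assumes fg: "fitness_graph V E w m r" and XV: "X \<subseteq> V"
  shows "(\<Sum>u\<in>V. \<Sum>v\<in>V. w u v * (r u * fp V w m r (fullm u v X) + (m u - r u) * fp V w m r (mom u v X)))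
       = (\<Sum>u\<in>V. m u) * fp V w m r X"
proof -
  define f where "f = fp V w m r"
  define F where "F = (\<Sum>x\<in>V. fit m r X x)"
  define A where "A = (\<Sum>u\<in>V. \<Sum>v\<in>V. fit m r X u * w u v * f (fullm u v X))"
  have F_pos: "F > 0" unfolding F_def by (rule sumfit_pos[OF fg])
  have trm: "w u v * (r u * f (fullm u v X) + (m u - r u) * f (mom u v X))
      = fit m r X u * w u v * f (fullm u v X) + w u v * ((m u - fit m r X u) * f X)" for u v
    by (cases "u \<in> X") (auto simp: fullm_def mom_def fit_def algebra_simps)
  have "(\<Sum>u\<in>V. \<Sum>v\<in>V. w u v * (r u * f (fullm u v X) + (m u - r u) * f (mom u v X)))
      = A + (\<Sum>u\<in>V. \<Sum>v\<in>V. w u v * ((m u - fit m r X u) * f X))"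
    unfolding trm A_def by (simp add: sum.distrib)
  also have "(\<Sum>u\<in>V. \<Sum>v\<in>V. w u v * ((m u - fit m r X u) * f X)) = (\<Sum>u\<in>V. (m u - fit m r X u) * f X)"
    by (rule sum.cong[OF refl]) (rule sum_w_times[OF fg])
  also have "\<dots> = ((\<Sum>u\<in>V. m u) - F) * f X"
    unfolding F_def by (simp add: sum_distrib_right[symmetric] sum_subtractf)
  also have "A = F * f X"
  proof (cases "X = V \<or> X = {}")
    case True
    then have "fullm u v X = X" if "u \<in> V" "v \<in> V" for u v
      using that by (auto simp: fullm_def)
    then have "A = (\<Sum>u\<in>V. \<Sum>v\<in>V. w u v * (fit m r X u * f X))"
      unfolding A_def by (intro sum.cong refl) (simp add: algebra_simps)
    also have "\<dots> = (\<Sum>u\<in>V. fit m r X u * f X)"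
      by (rule sum.cong[OF refl]) (rule sum_w_times[OF fg])
    finally show ?thesis unfolding F_def by (simp add: sum_distrib_right)
  next
    case False
    then have "f X = moran_step V w m r f X" unfolding f_def using fp_props(4)[OF fg] by auto
    also have "\<dots> = A / F"
      unfolding moran_step_def A_def F_def fullm_def
      by (simp add: sum_divide_distrib)
    finally show ?thesis using F_pos by (simp add: field_simps)
  qed
  finally show ?thesis unfolding f_def by (simp add: algebra_simps)
qed

lemma edge_out:
  assumes "(x, y) \<in> E\<^sup>*" "x \<in> S" "y \<notin> S"
  shows "\<exists>u v. (u, v) \<in> E \<and> u \<in> S \<and> v \<notin> S"
  using assms by (induction rule: rtrancl_induct) auto

lemma sum_le_eq:
  fixes a b :: "'i \<Rightarrow> real"
  assumes "finite I" "\<And>i. i \<in> I \<Longrightarrow> a i \<le> b i" "sum b I \<le> sum a I" "j \<in> I"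
  shows "a j = b j"
proof -
  have "sum (\<lambda>i. b i - a i) I = 0"
    using assms(3) sum_mono[of I a b] assms(2) by (simp add: sum_subtractf)
  then have "\<forall>i\<in>I. b i - a i = 0"
    using sum_nonneg_eq_0_iff[OF assms(1), of "\<lambda>i. b i - a i"] assms(2) by simp
  then show ?thesis using assms(4) by simp
qed

lemma maxprin:
  fixes Phi :: "'a set \<Rightarrow> 'a set \<Rightarrow> real" and R :: "'a set \<Rightarrow> 'a set \<Rightarrow> bool"
  assumes fg: "fitness_graph V E w m r" and mb: "mutant_biased V m r"
    and RV: "\<And>X Y. R X Y \<Longrightarrow> X \<subseteq> V \<and> Y \<subseteq> V"
    and Rfull: "\<And>X Y u v. R X Y \<Longrightarrow> u \<in> V \<Longrightarrow> v \<in> V \<Longrightarrow> R (fullm u v X) (fullm u v Y)"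
    and Rmo: "\<And>X Y u v. R X Y \<Longrightarrow> u \<in> V \<Longrightarrow> v \<in> V \<Longrightarrow> R (mom u v X) (mom u v Y)"
    and harmI: "\<And>X Y. R X Y \<Longrightarrow> X \<noteq> {} \<Longrightarrow> X \<noteq> V \<Longrightarrow> (\<Sum>u\<in>V. m u) * Phi X Y
        \<le> (\<Sum>u\<in>V. \<Sum>v\<in>V. w u v * (r u * Phi (fullm u v X) (fullm u v Y)
              + (m u - r u) * Phi (mom u v X) (mom u v Y)))"
    and base: "\<And>X Y. R X Y \<Longrightarrow> X = {} \<or> X = V \<Longrightarrow> Phi X Y \<le> 0"
    and R0: "R X0 Y0"
  shows "Phi X0 Y0 \<le> 0"
proof -
  have finV: "finite V" by (rule fg_facts(1)[OF fg])
  define Pr where "Pr = {(X, Y). R X Y}"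
  have "Pr \<subseteq> Pow V \<times> Pow V" unfolding Pr_def using RV by auto
  then have finPr: "finite Pr" using finV by (meson finite_Pow_iff finite_SigmaI finite_subset)
  define M where "M = Max ((\<lambda>(X, Y). Phi X Y) ` Pr)"
  have leM: "Phi X Y \<le> M" if "R X Y" for X Y
    unfolding M_def using finPr that by (intro Max_ge) (auto simp: Pr_def)
  have mr: "m u - r u \<ge> 0" if "u \<in> V" for u using mb that unfolding mutant_biased_def by auto
  have claim: "\<forall>X Y. card (V - X) = n \<longrightarrow> R X Y \<longrightarrow> Phi X Y = M \<longrightarrow> M \<le> 0" for n
  proof (induction n rule: less_induct)
    case (less n)
    show ?case
    proof (intro allI impI)
      fix X Y assume cn: "card (V - X) = n" and RXY: "R X Y" and PM: "Phi X Y = M"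
      show "M \<le> 0"
      proof (cases "X = {} \<or> X = V")
        case True then show ?thesis using base[OF RXY] PM by auto
      next
        case False
        have XV: "X \<subseteq> V" using RV[OF RXY] by auto
        obtain a where a: "a \<in> X" using False by auto
        obtain b where b: "b \<in> V" "b \<notin> X" using False XV by auto
        have "(a, b) \<in> E\<^sup>*" using fg_facts(9)[OF fg] a b XV by auto
        then obtain u0 v0 where e: "(u0, v0) \<in> E" "u0 \<in> X" "v0 \<notin> X"
          using edge_out a b by metis
        have u0V: "u0 \<in> V" and v0V: "v0 \<in> V" using e fg_facts(3)[OF fg] by auto
        define a where "a u v = w u v * (r u * Phi (fullm u v X) (fullm u v Y)
              + (m u - r u) * Phi (mom u v X) (mom u v Y))" for u v
        define b where "b u v = w u v * (r u * M + (m u - r u) * M)" for u v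
        have ab: "a u v \<le> b u v" if "u \<in> V" "v \<in> V" for u v
          unfolding a_def b_def
          using that fg_facts(4,7)[OF fg] mr leM Rfull[OF RXY] Rmo[OF RXY]
          by (intro mult_left_mono add_mono) (auto simp: less_imp_le)
        have "(\<Sum>u\<in>V. \<Sum>v\<in>V. b u v) = (\<Sum>u\<in>V. m u * M)"
        proof (rule sum.cong[OF refl])
          fix u assume "u \<in> V"
          have "b u v = w u v * (m u * M)" for v unfolding b_def by (simp add: algebra_simps)
          then show "(\<Sum>v\<in>V. b u v) = m u * M" using sum_w_times[OF fg \<open>u \<in> V\<close>] by simp
        qed
        also have "\<dots> = (\<Sum>u\<in>V. m u) * Phi X Y" using PM by (simp add: sum_distrib_right)
        also have "\<dots> \<le> (\<Sum>u\<in>V. \<Sum>v\<in>V. a u v)" unfolding a_def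
          using harmI[OF RXY] False by auto
        finally have le: "(\<Sum>u\<in>V. \<Sum>v\<in>V. b u v) \<le> (\<Sum>u\<in>V. \<Sum>v\<in>V. a u v)" .
        have "(\<Sum>v\<in>V. a u0 v) = (\<Sum>v\<in>V. b u0 v)"
          by (rule sum_le_eq[OF finV _ le u0V]) (use ab finV in \<open>auto intro: sum_mono\<close>)
        then have "a u0 v0 = b u0 v0"
          by (intro sum_le_eq[OF finV _ _ v0V]) (use ab u0V in auto)
        then have eq: "w u0 v0 * r u0 * Phi (fullm u0 v0 X) (fullm u0 v0 Y)
            + w u0 v0 * (m u0 - r u0) * Phi (mom u0 v0 X) (mom u0 v0 Y)
            = w u0 v0 * r u0 * M + w u0 v0 * (m u0 - r u0) * M"
          unfolding a_def b_def by (simp add: algebra_simps)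
        have "w u0 v0 * (m u0 - r u0) * Phi (mom u0 v0 X) (mom u0 v0 Y) \<le> w u0 v0 * (m u0 - r u0) * M"
          using fg_facts(4)[OF fg u0V v0V] mr[OF u0V] leM[OF Rmo[OF RXY u0V v0V]]
          by (intro mult_left_mono) auto
        then have "w u0 v0 * r u0 * M \<le> w u0 v0 * r u0 * Phi (fullm u0 v0 X) (fullm u0 v0 Y)"
          using eq by linarith
        moreover have "w u0 v0 * r u0 > 0" using fg_facts(5)[OF fg e(1)] fg_facts(7)[OF fg u0V] by simp
        ultimately have "M \<le> Phi (fullm u0 v0 X) (fullm u0 v0 Y)" by (metis mult_le_cancel_left_pos)
        then have PM': "Phi (fullm u0 v0 X) (fullm u0 v0 Y) = M" using leM[OF Rfull[OF RXY u0V v0V]] by simp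
        have fX: "fullm u0 v0 X = insert v0 X" using e by (simp add: fullm_def)
        have "card (V - insert v0 X) < card (V - X)"
          using finV v0V e(3) by (intro psubset_card_mono) auto
        then show ?thesis using less[of "card (V - insert v0 X)"] cn PM' fX Rfull[OF RXY u0V v0V] by auto
      qed
    qed
  qed
  have "M \<in> (\<lambda>(X, Y). Phi X Y) ` Pr" unfolding M_def
    using finPr R0 by (intro Max_in) (auto simp: Pr_def)
  then obtain X1 Y1 where "R X1 Y1" "Phi X1 Y1 = M" by (auto simp: Pr_def)
  then have "M \<le> 0" using claim[of "card (V - X1)"] by auto
  then show ?thesis using leM[OF R0] by simp
qed

lemma fullm_sub: "X \<subseteq> Y \<Longrightarrow> fullm u v X \<subseteq> fullm u v Y"
  by (auto simp: fullm_def)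
lemma mom_sub: "X \<subseteq> Y \<Longrightarrow> mom u v X \<subseteq> mom u v Y"
  by (auto simp: mom_def)
lemma fullm_V: "X \<subseteq> V \<Longrightarrow> v \<in> V \<Longrightarrow> fullm u v X \<subseteq> V"
  by (auto simp: fullm_def)
lemma mom_V: "X \<subseteq> V \<Longrightarrow> v \<in> V \<Longrightarrow> mom u v X \<subseteq> V"
  by (auto simp: mom_def)
lemma fullm_un: "fullm u v (S \<union> T) = fullm u v S \<union> fullm u v T"
  by (auto simp: fullm_def)
lemma fullm_int: "fullm u v (S \<inter> T) = fullm u v S \<inter> fullm u v T"
  by (auto simp: fullm_def)
lemma mom_un: "mom u v (S \<union> T) = mom u v S \<union> mom u v T"
  by (auto simp: mom_def)
lemma mom_int: "mom u v (S \<inter> T) \<subseteq> mom u v S \<inter> mom u v T"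
  by (auto simp: mom_def)

lemma fp_mono:
  assumes fg: "fitness_graph V E w m r" and mb: "mutant_biased V m r"
    and "X \<subseteq> Y" "Y \<subseteq> V"
  shows "fp V w m r X \<le> fp V w m r Y"
proof -
  let ?f = "fp V w m r"
  let ?Q = "\<lambda>X. (\<Sum>u\<in>V. \<Sum>v\<in>V. w u v * (r u * ?f (fullm u v X) + (m u - r u) * ?f (mom u v X)))"
  have "?f X - ?f Y \<le> 0"
  proof (rule maxprin[OF fg mb, where R = "\<lambda>X Y. X \<subseteq> Y \<and> Y \<subseteq> V" and Phi = "\<lambda>X Y. ?f X - ?f Y"])
    show "\<And>X Y. X \<subseteq> Y \<and> Y \<subseteq> V \<Longrightarrow> X \<subseteq> V \<and> Y \<subseteq> V" by auto
    show "\<And>X Y u v. X \<subseteq> Y \<and> Y \<subseteq> V \<Longrightarrow> u \<in> V \<Longrightarrow> v \<in> V \<Longrightarrow>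
        fullm u v X \<subseteq> fullm u v Y \<and> fullm u v Y \<subseteq> V"
      by (meson fullm_sub fullm_V)
    show "\<And>X Y u v. X \<subseteq> Y \<and> Y \<subseteq> V \<Longrightarrow> u \<in> V \<Longrightarrow> v \<in> V \<Longrightarrow>
        mom u v X \<subseteq> mom u v Y \<and> mom u v Y \<subseteq> V"
      by (meson mom_sub mom_V)
    show "\<And>X Y. X \<subseteq> Y \<and> Y \<subseteq> V \<Longrightarrow> X = {} \<or> X = V \<Longrightarrow> ?f X - ?f Y \<le> 0"
      using fp_props(1,3)[OF fg] by auto
    show "X \<subseteq> Y \<and> Y \<subseteq> V" using assms by auto
    fix X Y assume XY: "X \<subseteq> Y \<and> Y \<subseteq> V"
    have "(\<Sum>u\<in>V. m u) * (?f X - ?f Y) = ?Q X - ?Q Y"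
      using harm[OF fg, of X] harm[OF fg, of Y] XY by (simp only: right_diff_distrib) auto
    also have "\<dots> = (\<Sum>u\<in>V. \<Sum>v\<in>V. w u v * (r u * (?f (fullm u v X) - ?f (fullm u v Y))
              + (m u - r u) * (?f (mom u v X) - ?f (mom u v Y))))"
      by (simp only: sum_subtractf[symmetric]) (intro sum.cong refl; simp add: algebra_simps)
    finally show "(\<Sum>u\<in>V. m u) * (?f X - ?f Y) \<le> (\<Sum>u\<in>V. \<Sum>v\<in>V. w u v * (r u * (?f (fullm u v X) - ?f (fullm u v Y))
              + (m u - r u) * (?f (mom u v X) - ?f (mom u v Y))))" by (rule eq_refl)
  qed
  then show ?thesis by simp
qed

theorem lemma6:
  fixes V :: "'a set" and E :: "('a \<times> 'a) set" and w :: "'a \<Rightarrow> 'a \<Rightarrow> real"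
    and m r :: "'a \<Rightarrow> real" and S T :: "'a set"
  assumes "fitness_graph V E w m r"
    and "mutant_biased V m r"
    and "S \<subseteq> V" and "T \<subseteq> V"
  shows "fp V w m r S + fp V w m r T \<ge> fp V w m r (S \<union> T) + fp V w m r (S \<inter> T)"
proof -
  note fg = assms(1) and mb = assms(2)
  let ?f = "fp V w m r"
  let ?Q = "\<lambda>X. (\<Sum>u\<in>V. \<Sum>v\<in>V. w u v * (r u * ?f (fullm u v X) + (m u - r u) * ?f (mom u v X)))"
  let ?D = "\<lambda>S T. ?f (S \<union> T) + ?f (S \<inter> T) - ?f S - ?f T"
  have mr: "m u - r u \<ge> 0" if "u \<in> V" for u using mb that unfolding mutant_biased_def by auto
  have "?D S T \<le> 0"
  proof (rule maxprin[OF fg mb, where R = "\<lambda>S T. S \<subseteq> V \<and> T \<subseteq> V" and Phi = ?D])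
    show "\<And>X Y. X \<subseteq> V \<and> Y \<subseteq> V \<Longrightarrow> X \<subseteq> V \<and> Y \<subseteq> V" by auto
    show "\<And>X Y u v. X \<subseteq> V \<and> Y \<subseteq> V \<Longrightarrow> u \<in> V \<Longrightarrow> v \<in> V \<Longrightarrow>
        fullm u v X \<subseteq> V \<and> fullm u v Y \<subseteq> V"
      by (meson fullm_V)
    show "\<And>X Y u v. X \<subseteq> V \<and> Y \<subseteq> V \<Longrightarrow> u \<in> V \<Longrightarrow> v \<in> V \<Longrightarrow>
        mom u v X \<subseteq> V \<and> mom u v Y \<subseteq> V"
      by (meson mom_V)
    show "\<And>X Y. X \<subseteq> V \<and> Y \<subseteq> V \<Longrightarrow> X = {} \<or> X = V \<Longrightarrow> ?D X Y \<le> 0"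
    proof -
      fix X Y assume "X \<subseteq> V \<and> Y \<subseteq> V" "X = {} \<or> X = V"
      then have "X \<union> Y = Y \<and> X \<inter> Y = X \<or> X \<union> Y = X \<and> X \<inter> Y = Y" by auto
      then show "?D X Y \<le> 0" by auto
    qed
    show "S \<subseteq> V \<and> T \<subseteq> V" using assms by auto
    fix X Y assume XY: "X \<subseteq> V \<and> Y \<subseteq> V"
    have hU: "?Q (X \<union> Y) = (\<Sum>u\<in>V. m u) * ?f (X \<union> Y)" using harm[OF fg, of "X \<union> Y"] XY by auto
    have hI: "?Q (X \<inter> Y) = (\<Sum>u\<in>V. m u) * ?f (X \<inter> Y)" using harm[OF fg, of "X \<inter> Y"] XY by auto
    have hX: "?Q X = (\<Sum>u\<in>V. m u) * ?f X" using harm[OF fg, of X] XY by auto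
    have hY: "?Q Y = (\<Sum>u\<in>V. m u) * ?f Y" using harm[OF fg, of Y] XY by auto
    have "(\<Sum>u\<in>V. m u) * ?D X Y = ?Q (X \<union> Y) + ?Q (X \<inter> Y) - ?Q X - ?Q Y"
      by (simp only: hU hI hX hY) (simp only: right_diff_distrib distrib_left)
    also have "\<dots> = (\<Sum>u\<in>V. \<Sum>v\<in>V. w u v * (r u * (?f (fullm u v (X \<union> Y)) + ?f (fullm u v (X \<inter> Y)) - ?f (fullm u v X) - ?f (fullm u v Y))
        + (m u - r u) * (?f (mom u v (X \<union> Y)) + ?f (mom u v (X \<inter> Y)) - ?f (mom u v X) - ?f (mom u v Y))))"
    proof -
      let ?t = "\<lambda>Z u v. w u v * (r u * ?f (fullm u v Z) + (m u - r u) * ?f (mom u v Z))"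
      have "?Q (X \<union> Y) + ?Q (X \<inter> Y) - ?Q X - ?Q Y
          = (\<Sum>u\<in>V. \<Sum>v\<in>V. ?t (X \<union> Y) u v + ?t (X \<inter> Y) u v - ?t X u v - ?t Y u v)"
        by (simp only: sum.distrib sum_subtractf)
      also have "\<dots> = (\<Sum>u\<in>V. \<Sum>v\<in>V. w u v * (r u * (?f (fullm u v (X \<union> Y)) + ?f (fullm u v (X \<inter> Y)) - ?f (fullm u v X) - ?f (fullm u v Y))
        + (m u - r u) * (?f (mom u v (X \<union> Y)) + ?f (mom u v (X \<inter> Y)) - ?f (mom u v X) - ?f (mom u v Y))))"
        by (intro sum.cong refl) (simp only: ring_distribs)
      finally show ?thesis .
    qed
    also have "\<dots> \<le> (\<Sum>u\<in>V. \<Sum>v\<in>V. w u v * (r u * ?D (fullm u v X) (fullm u v Y)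
        + (m u - r u) * ?D (mom u v X) (mom u v Y)))"
    proof (intro sum_mono)
      fix u v assume uv: "u \<in> V" "v \<in> V"
      have "mom u v (X \<inter> Y) \<subseteq> mom u v X \<inter> mom u v Y" by (rule mom_int)
      moreover have "mom u v X \<inter> mom u v Y \<subseteq> V" using mom_V[of X V v u] mom_V[of Y V v u] XY uv by auto
      ultimately have "?f (mom u v (X \<inter> Y)) \<le> ?f (mom u v X \<inter> mom u v Y)"
        by (rule fp_mono[OF fg mb])
      then have "(m u - r u) * (?f (mom u v (X \<union> Y)) + ?f (mom u v (X \<inter> Y)) - ?f (mom u v X) - ?f (mom u v Y))
          \<le> (m u - r u) * ?D (mom u v X) (mom u v Y)"
        using mr[OF uv(1)] by (intro mult_left_mono) (auto simp: mom_un)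
      then show "w u v * (r u * (?f (fullm u v (X \<union> Y)) + ?f (fullm u v (X \<inter> Y)) - ?f (fullm u v X) - ?f (fullm u v Y))
        + (m u - r u) * (?f (mom u v (X \<union> Y)) + ?f (mom u v (X \<inter> Y)) - ?f (mom u v X) - ?f (mom u v Y)))
        \<le> w u v * (r u * ?D (fullm u v X) (fullm u v Y)
        + (m u - r u) * ?D (mom u v X) (mom u v Y))"
        using fg_facts(4)[OF fg uv] by (intro mult_left_mono) (auto simp: fullm_un fullm_int)
    qed
    finally show "(\<Sum>u\<in>V. m u) * ?D X Y \<le> (\<Sum>u\<in>V. \<Sum>v\<in>V. w u v * (r u * ?D (fullm u v X) (fullm u v Y)
        + (m u - r u) * ?D (mom u v X) (mom u v Y)))" .
  qed
  then show ?thesis by simp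
qed

end
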